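(* Let $\mathbb{F}$ be a field, $0\neq h\in\mathbb{F}[x]$, $A_1$ the Weyl algebra and $A=A_h\subseteq A_1$ the unital subalgebra generated by $x$ and $\hat y=yh$. For $\alpha\in A_1$ let $F_\alpha:\mathbb{F}[x]\to A_1$ be the linear map with $F_\alpha(x^s)=\sum_{\ell=0}^{s-1}x^\ell\alpha x^{s-\ell-1}$ for $s\geq0$ (so $F_\alpha(1)=0$). Then for all $f,g\in\mathbb{F}[x]$: (a) $F_\alpha(fg)=fF_\alpha(g)+F_\alpha(f)g$; (b) if $\alpha$ commutes with $x$, then $F_\alpha(f)=\alpha f'$; (c) if $\alpha\in A$, then $F_\alpha(f)\in f'\alpha+[x,A]$.
   Context: $A_1$ is generated by $x,y$ with $yx-xy=1$. $[x,A]=\{xa-ax:a\in A\}$. $f'$ is the derivative of $f$. *)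

theory Defs
  imports "HOL-Computational_Algebra.Polynomial"
begin

text \<open>The first Weyl algebra A_1 over a field, generated by x, y with yx - xy = 1,
  realised in normal form: an element is sum_j p_j(x) y^j, stored as a polynomial in y
  (outer) whose coefficients are polynomials in x (inner), type 'a poly poly.
  Multiplication uses y^i q(x) = sum_k (i choose k) q^(k)(x) y^(i-k), an identity
  with integer coefficients valid in every characteristic.\<close>

type_synonym 'a weyl = "'a poly poly"

definition weyl_mult :: "'a::field weyl \<Rightarrow> 'a weyl \<Rightarrow> 'a weyl" (infixl "\<star>" 70) where
  "P \<star> Q = (\<Sum>i\<le>degree P. \<Sum>j\<le>degree Q. \<Sum>k\<le>i.
      monom (coeff P i * of_nat (i choose k) * (pderiv ^^ k) (coeff Q j)) (i + j - k))"

definition weyl_emb :: "'a::field poly \<Rightarrow> 'a weyl" where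
  "weyl_emb f = [:f:]"

definition weyl_x :: "'a::field weyl" where
  "weyl_x = weyl_emb [:0, 1:]"

definition weyl_y :: "'a::field weyl" where
  "weyl_y = monom 1 1"

definition weyl_scale :: "'a::field \<Rightarrow> 'a weyl \<Rightarrow> 'a weyl" where
  "weyl_scale c P = smult [:c:] P"

inductive_set weyl_sub :: "'a::field poly \<Rightarrow> 'a weyl set" for h where
  one: "1 \<in> weyl_sub h"
| gen_x: "weyl_x \<in> weyl_sub h"
| gen_yh: "weyl_y \<star> weyl_emb h \<in> weyl_sub h"
| add: "a \<in> weyl_sub h \<Longrightarrow> b \<in> weyl_sub h \<Longrightarrow> a + b \<in> weyl_sub h"
| scale: "a \<in> weyl_sub h \<Longrightarrow> weyl_scale c a \<in> weyl_sub h"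
| mult: "a \<in> weyl_sub h \<Longrightarrow> b \<in> weyl_sub h \<Longrightarrow> a \<star> b \<in> weyl_sub h"

definition weyl_F :: "'a::field weyl \<Rightarrow> 'a poly \<Rightarrow> 'a weyl" where
  "weyl_F \<alpha> f = (\<Sum>s\<le>degree f. weyl_scale (coeff f s)
      (\<Sum>l<s. weyl_emb (monom 1 l) \<star> \<alpha> \<star> weyl_emb (monom 1 (s - l - 1))))"

end

theory Submission
  imports Defs
begin

definition rm :: "'a::field poly \<Rightarrow> 'a weyl \<Rightarrow> 'a weyl" where
  "rm p Q = Q \<star> [:p:]"

lemma inner_delta:
  fixes i n :: nat
  shows "(\<Sum>k\<le>i. if i - k = n then f k else 0) = (if n \<le> i then f (i - n) else (0::'b::comm_monoid_add))"
proof -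
  have "(\<Sum>k\<le>i. if i - k = n then f k else 0) = (\<Sum>k\<le>i. if k = i - n then (if n \<le> i then f k else 0) else 0)"
  proof (rule sum.cong[OF refl])
    fix k assume "k \<in> {..i}"
    then have "(i - k = n) = (k = i - n \<and> n \<le> i)" by auto
    then show "(if i - k = n then f k else 0) = (if k = i - n then (if n \<le> i then f k else 0) else 0)" by auto
  qed
  also have "\<dots> = (if n \<le> i then f (i - n) else 0)" by (subst sum.delta) auto
  finally show ?thesis .
qed

lemma coeff_rm:
  assumes "degree Q \<le> N"
  shows "coeff (rm p Q) n = (\<Sum>i\<le>N. if n \<le> i then coeff Q i * of_nat (i choose (i - n)) * (pderiv ^^ (i - n)) p else 0)"
proof -
  have "coeff (rm p Q) n = (\<Sum>i\<le>degree Q. \<Sum>k\<le>i. if i - k = n then coeff Q i * of_nat (i choose k) * (pderiv ^^ k) p else 0)"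
    by (simp add: rm_def weyl_mult_def coeff_sum coeff_monom)
  also have "\<dots> = (\<Sum>i\<le>degree Q. if n \<le> i then coeff Q i * of_nat (i choose (i - n)) * (pderiv ^^ (i - n)) p else 0)"
    by (simp only: inner_delta)
  also have "\<dots> = (\<Sum>i\<le>N. if n \<le> i then coeff Q i * of_nat (i choose (i - n)) * (pderiv ^^ (i - n)) p else 0)"
    by (rule sum.mono_neutral_left) (use assms in \<open>auto simp: coeff_eq_0\<close>)
  finally show ?thesis .
qed

lemma smult_sum_right: "smult c (\<Sum>i\<in>S. f i) = (\<Sum>i\<in>S. smult c (f i))"
  by (induction S rule: infinite_finite_induct) (simp_all add: smult_add_right)

lemma lm_emb: "weyl_emb p \<star> Q = smult p Q"
proof -
  have "weyl_emb p \<star> Q = (\<Sum>j\<le>degree Q. monom (p * coeff Q j) j)"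
    by (simp add: weyl_emb_def weyl_mult_def)
  also have "\<dots> = smult p (\<Sum>j\<le>degree Q. monom (coeff Q j) j)"
    by (simp add: smult_sum_right smult_monom)
  finally show ?thesis by (simp add: poly_as_sum_of_monoms)
qed

lemma higher_pderiv_0: "(pderiv ^^ k) 0 = 0"
  by (induction k) (auto simp: pderiv_0)

lemma higher_pderiv_add: "(pderiv ^^ k) (p + q) = (pderiv ^^ k) p + (pderiv ^^ k) q"
  by (induction k) (auto simp: pderiv_add)

lemma higher_pderiv_smult: "(pderiv ^^ k) (smult c p) = smult c ((pderiv ^^ k) p)"
  by (induction k) (auto simp: pderiv_smult)

lemma higher_pderiv_X_ge2: "(pderiv ^^ (Suc (Suc k))) [:0, 1:] = 0"
  by (simp only: funpow_Suc_right) (simp add: pderiv_pCons higher_pderiv_0 pderiv_0)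

lemma higher_pderiv_mult_X:
  "(pderiv ^^ k) (p * [:0,1:]) = [:0,1:] * (pderiv ^^ k) p + of_nat k * (pderiv ^^ (k - 1)) p"
proof (induction k)
  case 0 then show ?case by simp
next
  case (Suc k)
  have dX: "pderiv [:0,1::'a:] = 1" by (simp add: pderiv_pCons)
  show ?case
  proof (cases k)
    case 0 then show ?thesis by (simp add: pderiv_mult dX pderiv_pCons add.commute)
  next
    case (Suc j)
    have "(pderiv ^^ Suc k) (p * [:0,1:]) = pderiv ([:0,1:] * (pderiv ^^ k) p + of_nat k * (pderiv ^^ (k - 1)) p)"
      using Suc.IH by simp
    also have "\<dots> = [:0,1:] * (pderiv ^^ Suc k) p + (pderiv ^^ k) p + of_nat k * (pderiv ^^ k) p"
      using Suc by (simp add: pderiv_add pderiv_mult dX pderiv_of_nat pderiv_pCons add.commute)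
    finally show ?thesis by (simp add: algebra_simps)
  qed
qed


lemma rm_X: "rm [:0,1:] Z = smult [:0,1:] Z + pderiv Z"
proof (rule poly_eqI)
  fix n
  let ?N = "degree Z + Suc n"
  let ?g = "\<lambda>i. if n \<le> i then coeff Z i * of_nat (i choose (i-n)) * (pderiv^^(i-n)) [:0,1:] else 0"
  have "coeff (rm [:0,1:] Z) n = sum ?g {..?N}" by (rule coeff_rm) simp
  also have "\<dots> = sum ?g {n, Suc n}"
  proof (rule sum.mono_neutral_right)
    show "\<forall>i\<in>{..?N} - {n, Suc n}. ?g i = 0"
    proof
      fix i assume i: "i \<in> {..?N} - {n, Suc n}"
      show "?g i = 0"
      proof (cases "n \<le> i")
        case True
        have "i \<noteq> n" "i \<noteq> Suc n" using i by auto
        then have "i - n = Suc (Suc (i - n - 2))" using True by arith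
        then obtain j where "i - n = Suc (Suc j)" by blast
        then show ?thesis by (simp del: funpow.simps add: higher_pderiv_X_ge2)
      qed simp
    qed
  qed auto
  also have "\<dots> = coeff Z n * [:0,1:] + coeff Z (Suc n) * of_nat (Suc n)"
    by (simp add: pderiv_pCons)
  finally show "coeff (rm [:0,1:] Z) n = coeff (smult [:0,1:] Z + pderiv Z) n"
    by (simp add: coeff_pderiv mult.commute)
qed

lemma aux_ring: "(sn::'b::comm_ring) * c0 = c1 * sm \<Longrightarrow>
  x * (q * c1 * d1) + sn * (q * c0 * d0) = q * c1 * (x * d1 + sm * d0)"
proof -
  assume h: "sn * c0 = c1 * sm"
  have "sn * (q * c0 * d0) = q * (sn * c0) * d0" by (simp add: ac_simps)
  also have "\<dots> = q * c1 * (sm * d0)" using h by (simp add: ac_simps)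
  finally show ?thesis by (simp add: algebra_simps)
qed

lemma rm_comp_X: "rm [:0,1:] (rm p Q) = rm (p * [:0,1:]) Q"
proof (rule poly_eqI)
  fix n
  let ?N = "degree Q"
  let ?X = "[:0,1:] :: 'a poly"
  have "coeff (rm ?X (rm p Q)) n = ?X * coeff (rm p Q) n + of_nat (Suc n) * coeff (rm p Q) (Suc n)"
    by (simp add: rm_X coeff_pderiv)
  also have "\<dots> = ?X * (\<Sum>i\<le>?N. if n \<le> i then coeff Q i * of_nat (i choose (i - n)) * (pderiv ^^ (i - n)) p else 0)
     + of_nat (Suc n) * (\<Sum>i\<le>?N. if Suc n \<le> i then coeff Q i * of_nat (i choose (i - Suc n)) * (pderiv ^^ (i - Suc n)) p else 0)"
    by (simp only: coeff_rm[OF order.refl])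
  also have "\<dots> = (\<Sum>i\<le>?N. if n \<le> i then coeff Q i * of_nat (i choose (i - n)) * (?X * (pderiv ^^ (i - n)) p + of_nat (i - n) * (pderiv ^^ (i - n - 1)) p) else 0)"
    unfolding sum_distrib_left sum.distrib[symmetric]
  proof (rule sum.cong[OF refl])
    fix i
    show "?X * (if n \<le> i then coeff Q i * of_nat (i choose (i - n)) * (pderiv ^^ (i - n)) p else 0) +
         of_nat (Suc n) * (if Suc n \<le> i then coeff Q i * of_nat (i choose (i - Suc n)) * (pderiv ^^ (i - Suc n)) p else 0) =
         (if n \<le> i then coeff Q i * of_nat (i choose (i - n)) * (?X * (pderiv ^^ (i - n)) p + of_nat (i - n) * (pderiv ^^ (i - n - 1)) p) else 0)"
    proof (cases "Suc n \<le> i")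
      case True
      then obtain m where im: "i = Suc n + m" by (metis le_Suc_ex)
      have key0: "Suc n * (i choose m) = (i choose Suc m) * Suc m"
        using Suc_times_binomial_add[of m n] im by (simp add: add.commute mult.commute)
      have key: "of_nat (Suc n) * of_nat (i choose m) = (of_nat (i choose Suc m) * of_nat (Suc m) :: 'a poly)"
        by (metis key0 of_nat_mult)
      have e1: "i - n = Suc m" "i - Suc n = m" "i - n - 1 = m" using im by auto
      have c: "n \<le> i" using True by simp
      show ?thesis unfolding e1 by (simp only: c True if_True diff_Suc_1) (rule aux_ring[OF key])
    next
      case False
      then show ?thesis by (cases "n = i") auto
    qed
  qed
  also have "\<dots> = coeff (rm (p * ?X) Q) n"
    by (simp only: coeff_rm[OF order.refl] higher_pderiv_mult_X)
  finally show "coeff (rm ?X (rm p Q)) n = coeff (rm (p * ?X) Q) n" .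
qed


definition rsum :: "'a::field poly \<Rightarrow> 'a weyl \<Rightarrow> nat \<Rightarrow> nat \<Rightarrow> 'a poly" where
  "rsum p Q n N = (\<Sum>i\<le>N. if n \<le> i then coeff Q i * of_nat (i choose (i - n)) * (pderiv ^^ (i - n)) p else 0)"

lemma coeff_rm': "degree Q \<le> N \<Longrightarrow> coeff (rm p Q) n = rsum p Q n N"
  unfolding rsum_def by (rule coeff_rm)

lemma rm_add_left: "rm p (P + Q) = rm p P + rm p Q"
proof (rule poly_eqI)
  fix n
  let ?N = "max (degree P) (degree Q)"
  have d: "degree (P + Q) \<le> ?N" by (rule degree_add_le) auto
  show "coeff (rm p (P + Q)) n = coeff (rm p P + rm p Q) n"
    apply (simp only: coeff_add coeff_rm'[OF d] coeff_rm'[of P ?N] coeff_rm'[of Q ?N] max.cobounded1 max.cobounded2)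
    unfolding rsum_def
    by (auto simp: sum.distrib[symmetric] distrib_right intro!: sum.cong)
qed

lemma rm_smult_left: "rm p (smult c Q) = smult c (rm p Q)"
proof (rule poly_eqI)
  fix n
  have d: "degree (smult c Q) \<le> degree Q" by (rule degree_smult_le)
  show "coeff (rm p (smult c Q)) n = coeff (smult c (rm p Q)) n"
    apply (simp only: coeff_smult coeff_rm'[OF d] coeff_rm'[OF order.refl[of "degree Q"]])
    unfolding rsum_def
    by (subst sum_distrib_left) (rule sum.cong; simp add: mult.assoc)
qed

lemma rm_zero_left: "rm p 0 = 0"
  by (simp add: rm_def weyl_mult_def)

lemma rm_diff_left: "rm p (P - Q) = rm p P - rm p Q"
proof -
  have "rm p (P - Q) + rm p Q = rm p P" by (simp only: rm_add_left[symmetric]) simp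
  then show ?thesis by (simp add: algebra_simps)
qed

lemma rm_sum_left: "rm p (\<Sum>i\<in>S. f i) = (\<Sum>i\<in>S. rm p (f i))"
  by (induction S rule: infinite_finite_induct) (simp_all add: rm_add_left rm_zero_left)

lemma rm_add_right: "rm (p + q) Q = rm p Q + rm q Q"
proof (rule poly_eqI)
  fix n
  show "coeff (rm (p + q) Q) n = coeff (rm p Q + rm q Q) n"
    unfolding coeff_add coeff_rm[OF order.refl] higher_pderiv_add
    by (auto simp: sum.distrib[symmetric] distrib_left intro!: sum.cong)
qed

lemma rm_smult_right: "rm (smult a p) Q = smult [:a:] (rm p Q)"
proof (rule poly_eqI)
  fix n
  show "coeff (rm (smult a p) Q) n = coeff (smult [:a:] (rm p Q)) n"
    unfolding coeff_smult coeff_rm[OF order.refl] higher_pderiv_smult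
    by (auto simp: sum_distrib_left intro!: sum.cong)
qed

lemma rm_zero_right: "rm 0 Q = 0"
  using rm_smult_right[of 0 0 Q] by simp

lemma rm_sum_right: "rm (\<Sum>i\<in>S. f i) Q = (\<Sum>i\<in>S. rm (f i) Q)"
  by (induction S rule: infinite_finite_induct) (simp_all add: rm_add_right rm_zero_right)

lemma rm_one: "rm 1 Q = Q"
proof (rule poly_eqI)
  fix n
  let ?g = "\<lambda>i. if n \<le> i then coeff Q i * of_nat (i choose (i - n)) * (pderiv ^^ (i - n)) 1 else 0"
  have g: "?g i = (if i = n then coeff Q n else 0)" for i
  proof (cases "n < i")
    case True
    then obtain j where "i - n = Suc j" by (metis Suc_diff_Suc)
    then show ?thesis using True by (simp only: funpow_Suc_right) (simp add: pderiv_1 higher_pderiv_0)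
  qed auto
  have "coeff (rm 1 Q) n = sum ?g {..degree Q + n}" by (rule coeff_rm) simp
  also have "\<dots> = coeff Q n" unfolding g by simp
  finally show "coeff (rm 1 Q) n = coeff Q n" .
qed

lemma monom_Suc_X: "monom (1::'a::field) (Suc k) = monom 1 k * [:0,1:]"
  by (simp add: monom_altdef)

lemma rm_monom_comp: "rm (monom 1 b) (rm (monom 1 a) Q) = rm (monom 1 (a + b)) Q"
proof (induction b)
  case 0 then show ?case by (simp add: rm_one)
next
  case (Suc b)
  have "rm (monom 1 (Suc b)) (rm (monom 1 a) Q) = rm [:0,1:] (rm (monom 1 b) (rm (monom 1 a) Q))"
    by (simp only: monom_Suc_X rm_comp_X)
  also have "\<dots> = rm (monom 1 (a + Suc b)) Q"
    by (simp only: Suc.IH rm_comp_X add_Suc_right monom_Suc_X)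
  finally show ?case .
qed


definition GG :: "'a::field weyl \<Rightarrow> nat \<Rightarrow> 'a weyl" where
  "GG \<alpha> s = (\<Sum>l<s. smult (monom 1 l) (rm (monom 1 (s - l - 1)) \<alpha>))"

lemma F_term: "weyl_emb (monom 1 l) \<star> \<alpha> \<star> weyl_emb (monom 1 m) = smult (monom 1 l) (rm (monom 1 m) \<alpha>)"
  unfolding lm_emb using rm_smult_left[of "monom 1 m" "monom 1 l" \<alpha>] by (simp add: rm_def weyl_emb_def)

lemma smult_const_add: "smult [:a + b:] Q = smult [:a:] Q + smult [:b::'a::field:] Q"
  by (subst smult_add_left[symmetric]) simp

lemma const_monom: "[:c:] * monom 1 a = monom (c::'a::field) a"
  by (simp add: smult_monom)

lemma weyl_F_expand: "weyl_F \<alpha> f = (\<Sum>s\<le>degree f. smult [:coeff f s:] (GG \<alpha> s))"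
  by (simp add: weyl_F_def weyl_scale_def F_term GG_def)

lemma weyl_F_N: "degree f \<le> N \<Longrightarrow> weyl_F \<alpha> f = (\<Sum>s\<le>N. smult [:coeff f s:] (GG \<alpha> s))"
  unfolding weyl_F_expand by (rule sum.mono_neutral_left) (auto simp: coeff_eq_0)

lemma F_add: "weyl_F \<alpha> (f + g) = weyl_F \<alpha> f + weyl_F \<alpha> g"
proof -
  let ?N = "max (degree f) (degree g)"
  have d: "degree (f + g) \<le> ?N" by (rule degree_add_le) auto
  show ?thesis
    by (simp only: weyl_F_N[OF d] weyl_F_N[of f ?N] weyl_F_N[of g ?N] max.cobounded1 max.cobounded2)
       (simp add: sum.distrib[symmetric] smult_const_add)
qed

lemma F_zero: "weyl_F \<alpha> 0 = 0"
  by (simp add: weyl_F_expand)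

lemma F_sum: "weyl_F \<alpha> (\<Sum>i\<in>S. f i) = (\<Sum>i\<in>S. weyl_F \<alpha> (f i))"
  by (induction S rule: infinite_finite_induct) (simp_all add: F_add F_zero)

lemma F_monom: "weyl_F \<alpha> (monom c s) = smult [:c:] (GG \<alpha> s)"
proof -
  have "weyl_F \<alpha> (monom c s) = (\<Sum>s'\<le>s. smult [:coeff (monom c s) s':] (GG \<alpha> s'))"
    by (rule weyl_F_N) (simp add: degree_monom_le)
  also have "\<dots> = (\<Sum>s'\<le>s. if s' = s then smult [:c:] (GG \<alpha> s) else 0)"
    by (rule sum.cong) (auto simp: coeff_monom)
  finally show ?thesis by simp
qed

lemma GG_0: "GG \<alpha> 0 = 0" by (simp add: GG_def)

lemma GG_Suc: "GG \<alpha> (Suc s) = rm (monom 1 s) \<alpha> + smult [:0,1:] (GG \<alpha> s)"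
proof -
  have "GG \<alpha> (Suc s) = smult (monom 1 0) (rm (monom 1 s) \<alpha>) +
     (\<Sum>l<s. smult (monom 1 (Suc l)) (rm (monom 1 (s - l - 1)) \<alpha>))"
    unfolding GG_def by (subst sum.lessThan_Suc_shift) simp
  also have "\<dots> = rm (monom 1 s) \<alpha> + smult [:0,1:] (GG \<alpha> s)"
    by (simp add: GG_def smult_sum_right monom_Suc_X mult.commute)
  finally show ?thesis .
qed

lemma monom_Suc_X': "monom (1::'a::field) (Suc k) = [:0,1:] * monom 1 k"
  by (simp add: monom_Suc_X mult.commute)

lemma GG_add: "GG \<alpha> (a + b) = smult (monom 1 a) (GG \<alpha> b) + rm (monom 1 b) (GG \<alpha> a)"
proof (induction a)
  case 0 then show ?case by (simp add: GG_0 rm_zero_left)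
next
  case (Suc a)
  have "GG \<alpha> (Suc a + b) = rm (monom 1 (a + b)) \<alpha> + smult [:0,1:] (GG \<alpha> (a + b))"
    by (simp add: GG_Suc)
  also have "\<dots> = rm (monom 1 (a + b)) \<alpha> + smult [:0,1:] (smult (monom 1 a) (GG \<alpha> b)) + smult [:0,1:] (rm (monom 1 b) (GG \<alpha> a))"
    by (simp add: Suc.IH smult_add_right)
  also have "\<dots> = smult (monom 1 (Suc a)) (GG \<alpha> b) + rm (monom 1 b) (GG \<alpha> (Suc a))"
    by (simp only: GG_Suc rm_add_left rm_smult_left rm_monom_comp monom_Suc_X' smult_smult)
       (simp add: algebra_simps add.commute[of b a])
  finally show ?case .
qed

lemma part_a_monom:
  "weyl_F \<alpha> (monom c a * monom d b) = smult (monom c a) (weyl_F \<alpha> (monom d b)) + rm (monom d b) (weyl_F \<alpha> (monom c a))"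
proof -
  have md: "monom d b = smult d (monom 1 b)" by (simp add: smult_monom)
  have mc: "smult (monom c a) Q = smult [:c:] (smult (monom 1 a) Q)" for Q :: "'a weyl"
    by (simp add: smult_smult smult_monom)
  show ?thesis
    by (simp only: mult_monom F_monom GG_add mc rm_smult_left)
       (simp add: md rm_smult_right smult_add_right smult_smult mult.commute)
qed


lemma part_a: "weyl_F \<alpha> (f * g) = smult f (weyl_F \<alpha> g) + rm g (weyl_F \<alpha> f)"
proof -
  define m where "m s = monom (coeff f s) s" for s
  define n where "n t = monom (coeff g t) t" for t
  have sf: "(\<Sum>s\<le>degree f. m s) = f" by (simp only: m_def poly_as_sum_of_monoms)
  have sg: "(\<Sum>t\<le>degree g. n t) = g" by (simp only: n_def poly_as_sum_of_monoms)
  have fg: "f * g = (\<Sum>s\<le>degree f. \<Sum>t\<le>degree g. m s * n t)"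
    by (simp only: sf sg sum_product[symmetric])
  have "weyl_F \<alpha> (f * g) = (\<Sum>s\<le>degree f. \<Sum>t\<le>degree g. weyl_F \<alpha> (m s * n t))"
    by (simp only: fg F_sum)
  also have "\<dots> = (\<Sum>s\<le>degree f. \<Sum>t\<le>degree g. smult (m s) (weyl_F \<alpha> (n t)))
      + (\<Sum>s\<le>degree f. \<Sum>t\<le>degree g. rm (n t) (weyl_F \<alpha> (m s)))"
    by (simp add: m_def n_def part_a_monom sum.distrib)
  also have "(\<Sum>s\<le>degree f. \<Sum>t\<le>degree g. smult (m s) (weyl_F \<alpha> (n t))) = smult f (weyl_F \<alpha> g)"
  proof -
    have "smult (\<Sum>s\<le>degree f. m s) (weyl_F \<alpha> (\<Sum>t\<le>degree g. n t)) = (\<Sum>s\<le>degree f. \<Sum>t\<le>degree g. smult (m s) (weyl_F \<alpha> (n t)))"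
      by (simp only: smult_sum F_sum smult_sum_right) (rule sum.swap)
    then show ?thesis by (simp only: sf sg)
  qed
  also have "(\<Sum>s\<le>degree f. \<Sum>t\<le>degree g. rm (n t) (weyl_F \<alpha> (m s))) = rm g (weyl_F \<alpha> f)"
  proof -
    have "rm (\<Sum>t\<le>degree g. n t) (weyl_F \<alpha> (\<Sum>s\<le>degree f. m s)) = (\<Sum>s\<le>degree f. \<Sum>t\<le>degree g. rm (n t) (weyl_F \<alpha> (m s)))"
      by (simp only: F_sum rm_sum_left rm_sum_right)
    then show ?thesis by (simp only: sf sg)
  qed
  finally show ?thesis .
qed

lemma pCons_X: "pCons a p = [:a:] + p * [:0,1::'a::field:]"
  by simp

lemma rm_comm_all:
  assumes h: "rm [:0,1:] \<alpha> = smult [:0,1:] \<alpha>"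
  shows "rm p \<alpha> = smult p \<alpha>"
proof (induction p)
  case 0 then show ?case by (simp add: rm_zero_right)
next
  case (pCons a p)
  have c: "rm [:a:] \<alpha> = smult [:a:] \<alpha>"
    using rm_smult_right[of a 1 \<alpha>] by (simp add: rm_one)
  have "rm (pCons a p) \<alpha> = rm [:a:] \<alpha> + rm [:0,1:] (rm p \<alpha>)"
    by (subst pCons_X) (simp only: rm_add_right rm_comp_X)
  also have "\<dots> = smult [:a:] \<alpha> + smult p (smult [:0,1:] \<alpha>)"
    by (simp only: c pCons.IH rm_smult_left h)
  also have "\<dots> = smult (pCons a p) \<alpha>"
    by (simp only: smult_smult) (simp add: smult_add_left[symmetric] mult.commute)
  finally show ?case .
qed

lemma pderiv_monom_Suc: "pderiv (monom (1::'a::field) (Suc s)) = monom 1 s + [:0,1:] * pderiv (monom 1 s)"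
  by (simp only: monom_Suc_X' pderiv_mult) (simp add: pderiv_pCons add.commute)

lemma GG_comm:
  assumes h: "rm [:0,1:] \<alpha> = smult [:0,1:] \<alpha>"
  shows "GG \<alpha> s = smult (pderiv (monom 1 s)) \<alpha>"
proof (induction s)
  case 0 then show ?case by (simp add: GG_0 pderiv_monom)
next
  case (Suc s)
  show ?case
    by (simp only: GG_Suc Suc.IH rm_comm_all[OF h] pderiv_monom_Suc smult_smult smult_add_left)
qed

lemma sum_pderiv:
  "(\<Sum>s\<le>degree f. smult [:coeff f s:] (smult (pderiv (monom 1 s)) \<alpha>)) = smult (pderiv f) \<alpha>"
proof -
  have pd: "pderiv (\<Sum>i\<in>S. q i) = (\<Sum>i\<in>S. pderiv (q i))" for S and q :: "nat \<Rightarrow> 'a poly"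
    by (induction S rule: infinite_finite_induct) (simp_all add: pderiv_add pderiv_0)
  have "pderiv f = pderiv (\<Sum>s\<le>degree f. monom (coeff f s) s)" by (simp only: poly_as_sum_of_monoms)
  also have "\<dots> = (\<Sum>s\<le>degree f. [:coeff f s:] * pderiv (monom 1 s))"
    by (simp only: pd) (simp add: pderiv_monom smult_monom mult.commute)
  finally have e: "pderiv f = (\<Sum>s\<le>degree f. [:coeff f s:] * pderiv (monom 1 s))" .
  show ?thesis by (simp only: e smult_sum smult_smult)
qed

definition comm :: "'a::field weyl \<Rightarrow> 'a weyl" where
  "comm a = smult [:0,1:] a - rm [:0,1:] a"

lemma comm_add: "comm (a + b) = comm a + comm b"
  by (simp add: comm_def rm_add_left smult_add_right)

lemma comm_zero: "comm 0 = 0"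
  by (simp add: comm_def rm_zero_left)

lemma comm_diff: "comm (a - b) = comm a - comm b"
  by (simp add: comm_def rm_diff_left smult_diff_right)

lemma comm_smult: "comm (smult p a) = smult p (comm a)"
  by (simp add: comm_def rm_smult_left smult_diff_right smult_smult mult.commute)

lemma comm_rmX: "comm (rm [:0,1:] a) = rm [:0,1:] (comm a)"
  by (simp add: comm_def rm_smult_left rm_diff_left)

lemma comm_sum: "comm (\<Sum>i\<in>S. f i) = (\<Sum>i\<in>S. comm (f i))"
  by (induction S rule: infinite_finite_induct) (simp_all add: comm_add comm_zero)

lemma sub_zero: "0 \<in> weyl_sub h"
proof -
  have "weyl_scale 0 1 \<in> weyl_sub h" by (rule weyl_sub.scale[OF weyl_sub.one])
  then show ?thesis by (simp add: weyl_scale_def)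
qed

lemma sub_smult_const: "a \<in> weyl_sub h \<Longrightarrow> smult [:c:] a \<in> weyl_sub h"
proof -
  assume "a \<in> weyl_sub h"
  then have "weyl_scale c a \<in> weyl_sub h" by (rule weyl_sub.scale)
  then show ?thesis by (simp add: weyl_scale_def)
qed

lemma sub_diff: "a \<in> weyl_sub h \<Longrightarrow> b \<in> weyl_sub h \<Longrightarrow> a - b \<in> weyl_sub h"
proof -
  assume a: "a \<in> weyl_sub h" and b: "b \<in> weyl_sub h"
  have m1: "smult [:-1:] b = - b"
    by (metis add.inverse_neutral minus_pCons one_pCons smult_1_left smult_minus_left)
  have e: "a - b = a + smult [:-1:] b" by (simp only: m1) simp
  show ?thesis unfolding e by (rule weyl_sub.add[OF a sub_smult_const[OF b]])
qed

lemma sub_monom: "weyl_emb (monom 1 k) \<in> weyl_sub h"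
proof (induction k)
  case 0 then show ?case using weyl_sub.one by (simp add: weyl_emb_def one_pCons)
next
  case (Suc k)
  have "weyl_emb (monom 1 (Suc k)) = weyl_x \<star> weyl_emb (monom 1 k)"
    by (simp add: lm_emb weyl_x_def monom_Suc_X') (simp add: weyl_emb_def)
  then show ?case using weyl_sub.mult[OF weyl_sub.gen_x Suc.IH] by metis
qed

lemma sub_smult_monom: "a \<in> weyl_sub h \<Longrightarrow> smult (monom 1 k) a \<in> weyl_sub h"
proof -
  assume "a \<in> weyl_sub h"
  then have "weyl_emb (monom 1 k) \<star> a \<in> weyl_sub h" by (rule weyl_sub.mult[OF sub_monom])
  then show ?thesis by (simp add: lm_emb)
qed

lemma sub_smultX: "a \<in> weyl_sub h \<Longrightarrow> smult [:0,1:] a \<in> weyl_sub h"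
proof -
  assume "a \<in> weyl_sub h"
  then have "weyl_x \<star> a \<in> weyl_sub h" by (rule weyl_sub.mult[OF weyl_sub.gen_x])
  then show ?thesis by (simp add: lm_emb weyl_x_def)
qed

lemma sub_rmX: "a \<in> weyl_sub h \<Longrightarrow> rm [:0,1:] a \<in> weyl_sub h"
proof -
  assume "a \<in> weyl_sub h"
  then have "a \<star> weyl_x \<in> weyl_sub h" by (rule weyl_sub.mult[OF _ weyl_sub.gen_x])
  then show ?thesis by (simp add: rm_def weyl_x_def weyl_emb_def)
qed

lemma sub_sum: "(\<And>i. i \<in> S \<Longrightarrow> f i \<in> weyl_sub h) \<Longrightarrow> (\<Sum>i\<in>S. f i) \<in> weyl_sub h"
  by (induction S rule: infinite_finite_induct) (simp_all add: sub_zero weyl_sub.add)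

lemma claim1:
  assumes a: "\<alpha> \<in> weyl_sub h"
  shows "\<exists>b\<in>weyl_sub h. rm (monom 1 s) \<alpha> = smult (monom 1 s) \<alpha> + comm b"
proof (induction s)
  case 0 show ?case by (rule bexI[of _ 0]) (simp_all add: sub_zero rm_one comm_zero)
next
  case (Suc s)
  then obtain b where b: "b \<in> weyl_sub h" and e: "rm (monom 1 s) \<alpha> = smult (monom 1 s) \<alpha> + comm b" by blast
  have rX: "rm [:0,1:] \<alpha> = smult [:0,1:] \<alpha> - comm \<alpha>" by (simp add: comm_def)
  have "rm (monom 1 (Suc s)) \<alpha> = rm [:0,1:] (rm (monom 1 s) \<alpha>)"
    by (simp only: monom_Suc_X rm_comp_X)
  also have "\<dots> = smult (monom 1 s) (smult [:0,1:] \<alpha> - comm \<alpha>) + comm (rm [:0,1:] b)"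
    by (simp only: e rm_add_left rm_smult_left rX comm_rmX)
  also have "\<dots> = smult (monom 1 (Suc s)) \<alpha> + comm (rm [:0,1:] b - smult (monom 1 s) \<alpha>)"
    by (simp only: smult_diff_right smult_smult comm_diff comm_smult monom_Suc_X) (simp add: algebra_simps)
  finally show ?case using sub_diff[OF sub_rmX[OF b] sub_smult_monom[OF a]] by blast
qed

lemma claim2:
  assumes a: "\<alpha> \<in> weyl_sub h"
  shows "\<exists>c\<in>weyl_sub h. GG \<alpha> s = smult (pderiv (monom 1 s)) \<alpha> + comm c"
proof (induction s)
  case 0 show ?case by (rule bexI[of _ 0]) (simp_all add: sub_zero GG_0 comm_zero pderiv_monom)
next
  case (Suc s)
  then obtain c where c: "c \<in> weyl_sub h" and e: "GG \<alpha> s = smult (pderiv (monom 1 s)) \<alpha> + comm c" by blast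
  obtain b where b: "b \<in> weyl_sub h" and e1: "rm (monom 1 s) \<alpha> = smult (monom 1 s) \<alpha> + comm b"
    using claim1[OF a] by blast
  have "GG \<alpha> (Suc s) = smult (pderiv (monom 1 (Suc s))) \<alpha> + comm (b + smult [:0,1:] c)"
    by (simp only: GG_Suc e e1 pderiv_monom_Suc comm_add comm_smult smult_add_left smult_add_right smult_smult)
       (simp add: algebra_simps)
  then show ?case using weyl_sub.add[OF b sub_smultX[OF c]] by blast
qed

lemma part_c:
  assumes a: "\<alpha> \<in> weyl_sub h"
  shows "\<exists>w\<in>weyl_sub h. weyl_F \<alpha> f = smult (pderiv f) \<alpha> + comm w"
proof -
  from claim2[OF a] have "\<forall>s. \<exists>c. c \<in> weyl_sub h \<and> GG \<alpha> s = smult (pderiv (monom 1 s)) \<alpha> + comm c" by blast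
  then obtain c where c: "\<And>s. c s \<in> weyl_sub h" "\<And>s. GG \<alpha> s = smult (pderiv (monom 1 s)) \<alpha> + comm (c s)"
    by metis
  let ?w = "\<Sum>s\<le>degree f. smult [:coeff f s:] (c s)"
  have "weyl_F \<alpha> f = (\<Sum>s\<le>degree f. smult [:coeff f s:] (smult (pderiv (monom 1 s)) \<alpha>)) + comm ?w"
    by (simp only: weyl_F_expand c(2) smult_add_right sum.distrib comm_sum comm_smult)
  also have "\<dots> = smult (pderiv f) \<alpha> + comm ?w" by (simp only: sum_pderiv)
  finally show ?thesis using sub_sum[of "{..degree f}" "\<lambda>s. smult [:coeff f s:] (c s)" h] sub_smult_const[OF c(1)] by blast
qed

theorem lemma3p2:
  fixes h :: "'a::field poly" and \<alpha> :: "'a weyl"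
  assumes "h \<noteq> 0"
  shows "\<forall>f g :: 'a poly.
      weyl_F \<alpha> (f * g) = weyl_emb f \<star> weyl_F \<alpha> g + weyl_F \<alpha> f \<star> weyl_emb g
    \<and> (\<alpha> \<star> weyl_x = weyl_x \<star> \<alpha> \<longrightarrow> weyl_F \<alpha> f = \<alpha> \<star> weyl_emb (pderiv f))
    \<and> (\<alpha> \<in> weyl_sub h \<longrightarrow>
         (\<exists>a\<in>weyl_sub h. weyl_F \<alpha> f = weyl_emb (pderiv f) \<star> \<alpha> + (weyl_x \<star> a - a \<star> weyl_x)))"
proof (intro allI conjI impI)
  fix f g :: "'a poly"
  have r: "Q \<star> weyl_emb p = rm p Q" for p Q by (simp add: rm_def weyl_emb_def)
  have wx: "weyl_x \<star> Q = smult [:0,1:] Q" for Q :: "'a weyl" unfolding weyl_x_def lm_emb ..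
  have rx: "Q \<star> weyl_x = rm [:0,1:] Q" for Q :: "'a weyl" unfolding weyl_x_def r ..
  show "weyl_F \<alpha> (f * g) = weyl_emb f \<star> weyl_F \<alpha> g + weyl_F \<alpha> f \<star> weyl_emb g"
    by (simp only: part_a lm_emb r)
  show "weyl_F \<alpha> f = \<alpha> \<star> weyl_emb (pderiv f)" if hc: "\<alpha> \<star> weyl_x = weyl_x \<star> \<alpha>"
  proof -
    have hx: "rm [:0,1:] \<alpha> = smult [:0,1:] \<alpha>" using hc by (simp only: wx rx)
    have "weyl_F \<alpha> f = smult (pderiv f) \<alpha>"
      by (simp only: weyl_F_expand GG_comm[OF hx] sum_pderiv)
    also have "\<dots> = rm (pderiv f) \<alpha>" by (rule rm_comm_all[OF hx, symmetric])
    finally show ?thesis by (simp only: r)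
  qed
  show "\<exists>a\<in>weyl_sub h. weyl_F \<alpha> f = weyl_emb (pderiv f) \<star> \<alpha> + (weyl_x \<star> a - a \<star> weyl_x)"
    if ha: "\<alpha> \<in> weyl_sub h"
    using part_c[OF ha, of f] by (simp only: wx rx lm_emb comm_def)
qed

end
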